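(* Let $p_1,\dots,p_n\ge0$ with $\sum_ip_i=1$, integers $d_i\ge1$ with $\sum_ip_id_i>1$. For $\lambda\in(0,1)$ let $\bar F_\lambda$ solve $\bar F'(w)=\lambda\sum_{i=1}^np_i\bar F(w)^{d_i}-\bar F(w)$, $\bar F(0)=\lambda$. Define $\mathbb E[W^{(i)}_\lambda]=\int_0^\infty\bar F_\lambda(w)^{d_i}dw$, $\mathbb E[W_\lambda]=\sum_ip_i\mathbb E[W^{(i)}_\lambda]$, $\mathbb E[R^{(i)}_\lambda]=1+\mathbb E[W^{(i)}_\lambda]$, $\mathbb E[R_\lambda]=1+\mathbb E[W_\lambda]$. Then for every $i$, $$\lim_{\lambda\to1^-}-\frac{\mathbb E[R^{(i)}_\lambda]}{\log(1-\lambda)}=\lim_{\lambda\to1^-}-\frac{\mathbb E[R_\lambda]}{\log(1-\lambda)}=\lim_{\lambda\to1^-}-\frac{\mathbb E[W^{(i)}_\lambda]}{\log(1-\lambda)}=\lim_{\lambda\to1^-}-\frac{\mathbb E[W_\lambda]}{\log(1-\lambda)}=\frac1{\sum_{i=1}^np_id_i-1}.$$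
   Context: This models the LL($d_1,\dots,d_n,p_1,\dots,p_n$) policy: with probability $p_i$ a job is sent to the least loaded of $d_i$ randomly sampled servers; job sizes exponential with mean 1. *)

theory Defs
  imports "HOL-Analysis.Analysis"
begin

text \<open>F l w stands for the tail function bar F_lambda(w) at lambda = l.
  p, d are indexed by j < n.\<close>

definition EWi :: "(real \<Rightarrow> real \<Rightarrow> real) \<Rightarrow> (nat \<Rightarrow> nat) \<Rightarrow> nat \<Rightarrow> real \<Rightarrow> real" where
  "EWi F d i l = integral {0..} (\<lambda>w. F l w ^ d i)"

definition EW :: "nat \<Rightarrow> (nat \<Rightarrow> real) \<Rightarrow> (nat \<Rightarrow> nat) \<Rightarrow> (real \<Rightarrow> real \<Rightarrow> real) \<Rightarrow> real \<Rightarrow> real" where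
  "EW n p d F l = (\<Sum>j<n. p j * EWi F d j l)"

definition ERi :: "(real \<Rightarrow> real \<Rightarrow> real) \<Rightarrow> (nat \<Rightarrow> nat) \<Rightarrow> nat \<Rightarrow> real \<Rightarrow> real" where
  "ERi F d i l = 1 + EWi F d i l"

definition ER :: "nat \<Rightarrow> (nat \<Rightarrow> real) \<Rightarrow> (nat \<Rightarrow> nat) \<Rightarrow> (real \<Rightarrow> real \<Rightarrow> real) \<Rightarrow> real \<Rightarrow> real" where
  "ER n p d F l = 1 + EW n p d F l"

end

theory Submission
  imports Defs "HOL-Real_Asymp.Real_Asymp"
begin

lemma one_minus_pow_le:
  fixes t :: real assumes "0 \<le> t" "t \<le> 1"
  shows "1 - t^e \<le> real e * (1 - t)"
proof -
  have "1 + real e * (t - 1) \<le> (1 + (t - 1))^e"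
    by (rule Bernoulli_inequality) (use assms in auto)
  then show ?thesis by (simp add: algebra_simps)
qed

lemma one_minus_pow_ge:
  fixes s t :: real assumes "0 \<le> s" "s \<le> t" "t \<le> 1"
  shows "real e * s^e * (1 - t) \<le> 1 - t^e"
proof (induction e)
  case 0 then show ?case by simp
next
  case (Suc e)
  have a: "s^(Suc e) \<le> s^e" using assms power_decreasing[of e "Suc e" s] by simp
  have b: "s^e \<le> t^e" using assms by (simp add: power_mono)
  have c: "0 \<le> 1 - t" using assms by simp
  have "real (Suc e) * s^(Suc e) * (1-t) = real e * s^(Suc e) * (1-t) + s^(Suc e) * (1-t)"
    by (simp add: algebra_simps)
  also have "\<dots> \<le> real e * s^e * (1-t) + t^e * (1-t)"
    using a b c assms by (intro add_mono mult_right_mono mult_left_mono) auto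
  also have "\<dots> \<le> (1 - t^e) + t^e * (1-t)" using Suc by simp
  also have "\<dots> = 1 - t^Suc e" by (simp add: algebra_simps)
  finally show ?case .
qed

lemma integral_recip_lin:
  fixes A C s l :: real
  assumes "0 < A" "0 < C" "s \<le> l" "l \<le> 1"
  shows "integral {s..l} (\<lambda>t. 1 / (A + C * (1 - t))) = (ln (A + C*(1-s)) - ln (A + C*(1-l))) / C"
proof -
  let ?G = "\<lambda>t. - ln (A + C*(1-t)) / C"
  have "((\<lambda>t. 1 / (A + C * (1 - t))) has_integral (?G l - ?G s)) {s..l}"
  proof (rule fundamental_theorem_of_calculus[OF assms(3)])
    fix x assume x: "x \<in> {s..l}"
    have pos: "A + C*(1-x) > 0" using x assms by (simp add: add_pos_nonneg)
    have e: "\<And>P. P > 0 \<Longrightarrow> (- (1 / P * (0 + (0 * (1 - x) + (0 - 1) * C))) * C - - ln P * 0) / (C * C) = 1 / P"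
      using assms(2) by (simp add: field_simps)
    have "(?G has_real_derivative (1 / (A + C * (1 - x)))) (at x)"
      apply (rule derivative_eq_intros refl | use pos in simp)+
      using assms(2) apply simp by (rule e[OF pos])
    then show "(?G has_vector_derivative (1 / (A + C * (1 - x)))) (at x within {s..l})"
      by (simp add: has_real_derivative_iff_has_vector_derivative has_vector_derivative_at_within)
  qed
  then show ?thesis by (simp add: integral_unique diff_divide_distrib)
qed


locale llq =
  fixes n :: nat and p :: "nat \<Rightarrow> real" and d :: "nat \<Rightarrow> nat"
  assumes p_nonneg: "\<forall>j<n. p j \<ge> 0"
    and p_sum: "(\<Sum>j<n. p j) = 1"
    and d_pos: "\<forall>j<n. d j \<ge> 1"
    and drift: "(\<Sum>j<n. p j * real (d j)) > 1"
begin

definition phi :: "real \<Rightarrow> real" where "phi t = (\<Sum>k<n. p k * t^(d k - 1))"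
definition mm :: real where "mm = (\<Sum>j<n. p j * real (d j))"
definition cs :: "real \<Rightarrow> real" where "cs s = (\<Sum>k<n. p k * real (d k - 1) * s^(d k - 1))"

lemma mm_gt: "mm > 1" using drift by (simp add: mm_def)

lemma phi_nonneg: "0 \<le> t \<Longrightarrow> 0 \<le> phi t"
  unfolding phi_def using p_nonneg by (intro sum_nonneg) auto

lemma phi_mono: "0 \<le> t \<Longrightarrow> t \<le> t' \<Longrightarrow> phi t \<le> phi t'"
  unfolding phi_def using p_nonneg by (intro sum_mono mult_left_mono power_mono) auto

lemma phi_one: "phi 1 = 1" using p_sum by (simp add: phi_def)

lemma phi_le1: "0 \<le> t \<Longrightarrow> t \<le> 1 \<Longrightarrow> phi t \<le> 1"
  using phi_mono[of t 1] phi_one by simp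

lemma one_minus_phi: "1 - phi t = (\<Sum>k<n. p k * (1 - t^(d k - 1)))"
  unfolding phi_def using p_sum by (simp add: algebra_simps sum_subtractf sum_distrib_left)

lemma mm_minus1: "mm - 1 = (\<Sum>k<n. p k * real (d k - 1))"
proof -
  have "(\<Sum>k<n. p k * real (d k - 1)) = (\<Sum>k<n. p k * real (d k) - p k)"
    using d_pos by (intro sum.cong) (auto simp: of_nat_diff algebra_simps)
  then show ?thesis using p_sum by (simp add: mm_def sum_subtractf)
qed

lemma phi_upper: "0 \<le> t \<Longrightarrow> t \<le> 1 \<Longrightarrow> 1 - phi t \<le> (mm - 1) * (1 - t)"
proof -
  assume t: "0 \<le> t" "t \<le> 1"
  have "1 - phi t \<le> (\<Sum>k<n. p k * (real (d k - 1) * (1 - t)))"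
    unfolding one_minus_phi using p_nonneg one_minus_pow_le[OF t]
    by (intro sum_mono mult_left_mono) auto
  also have "\<dots> = (mm - 1) * (1 - t)" unfolding mm_minus1
    by (simp add: sum_distrib_left mult_ac)
  finally show ?thesis .
qed

lemma phi_lower: "0 \<le> s \<Longrightarrow> s \<le> t \<Longrightarrow> t \<le> 1 \<Longrightarrow> cs s * (1 - t) \<le> 1 - phi t"
proof -
  assume t: "0 \<le> s" "s \<le> t" "t \<le> 1"
  have "cs s * (1 - t) = (\<Sum>k<n. p k * (real (d k - 1) * s^(d k - 1) * (1 - t)))"
    unfolding cs_def by (simp add: sum_distrib_left mult_ac)
  also have "\<dots> \<le> 1 - phi t"
    unfolding one_minus_phi using p_nonneg one_minus_pow_ge[OF t]
    by (intro sum_mono mult_left_mono) auto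
  finally show ?thesis .
qed

lemma cs_tendsto: "(cs \<longlongrightarrow> mm - 1) (at_left 1)"
proof -
  have "isCont cs 1" unfolding cs_def by (intro continuous_intros)
  then have "(cs \<longlongrightarrow> cs 1) (at 1)" by (rule isContD)
  moreover have "cs 1 = mm - 1" unfolding cs_def mm_minus1 by simp
  ultimately show ?thesis using tendsto_mono[OF at_le[of "{..<1}" UNIV]] by simp
qed

end

context llq begin

definition J :: "nat \<Rightarrow> real \<Rightarrow> real" where
  "J D l = integral {0..l} (\<lambda>t. t^(D-1) / (1 - l * phi t))"

lemma denom_pos: "0 \<le> t \<Longrightarrow> t \<le> 1 \<Longrightarrow> l < 1 \<Longrightarrow> 0 \<le> l \<Longrightarrow> 1 - l * phi t > 0"
proof -
  assume a: "0 \<le> t" "t \<le> 1" "l < 1" "0 \<le> l"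
  have "l * phi t \<le> l * 1" using phi_le1[OF a(1,2)] a by (intro mult_left_mono) auto
  then show ?thesis using a by simp
qed

lemma cont_int: "0 \<le> l \<Longrightarrow> l < 1 \<Longrightarrow> b \<le> 1 \<Longrightarrow> 0 \<le> a \<Longrightarrow>
   continuous_on {a..b} (\<lambda>t. t^(D-1) / (1 - l * phi t))"
proof -
  assume a: "0 \<le> l" "l < 1" "b \<le> 1" "0 \<le> a"
  have "continuous_on {a..b} phi" unfolding phi_def by (intro continuous_intros)
  moreover have "\<forall>t\<in>{a..b}. 1 - l * phi t \<noteq> 0"
  proof
    fix t assume "t \<in> {a..b}"
    then have "0 \<le> t" "t \<le> 1" using a by auto
    then show "1 - l * phi t \<noteq> 0" using denom_pos a by force
  qed
  ultimately show ?thesis by (intro continuous_intros) auto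
qed

lemma J_lower:
  assumes s: "0 < s" "s < l" "l < 1"
  shows "s^(D-1) * (ln ((mm-1)*(1-s)) - ln mm - ln (1-l)) / (mm-1) \<le> J D l"
proof -
  let ?g = "\<lambda>t. t^(D-1) / (1 - l * phi t)"
  have int: "?g integrable_on {0..l}"
    by (rule integrable_continuous_interval, rule cont_int) (use s in auto)
  have ints: "?g integrable_on {s..l}"
    by (rule integrable_continuous_interval, rule cont_int) (use s in auto)
  have J: "J D l = integral {0..s} ?g + integral {s..l} ?g"
    unfolding J_def using Henstock_Kurzweil_Integration.integral_combine[OF _ _ int, of s] s by simp
  have "0 \<le> integral {0..s} ?g"
  proof (rule integral_nonneg)
    show "?g integrable_on {0..s}"
      by (rule integrable_continuous_interval, rule cont_int) (use s in auto)
    fix x assume x: "x \<in> {0..s}"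
    then have "1 - l * phi x > 0" using s by (intro denom_pos) auto
    then show "0 \<le> ?g x" using x by simp
  qed
  have m1: "mm - 1 > 0" using mm_gt by simp
  have "integral {s..l} (\<lambda>t. s^(D-1) * (1 / ((1-l) + (mm-1)*(1-t)))) \<le> integral {s..l} ?g"
  proof (rule integral_le)
    show "(\<lambda>t. s^(D-1) * (1 / ((1-l) + (mm-1)*(1-t)))) integrable_on {s..l}"
      using s m1 apply (intro integrable_continuous_interval continuous_intros)
      apply auto
      by (smt (verit, best) mult_nonneg_nonneg)
    show "?g integrable_on {s..l}" by fact
    fix t assume t: "t \<in> {s..l}"
    have t0: "0 \<le> t" "t \<le> 1" using t s by auto
    have dp: "1 - l * phi t > 0" using denom_pos[OF t0] s by simp
    have "1 - l * phi t = (1-l) + l * (1 - phi t)" by (simp add: algebra_simps)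
    also have "\<dots> \<le> (1-l) + (1 - phi t)"
      using phi_le1[OF t0] s by (intro add_left_mono mult_left_le_one_le) auto
    also have "\<dots> \<le> (1-l) + (mm-1)*(1-t)" using phi_upper[OF t0] by simp
    finally have le: "1 - l * phi t \<le> (1-l) + (mm-1)*(1-t)" .
    have "s^(D-1) / ((1-l) + (mm-1)*(1-t)) \<le> t^(D-1) / (1 - l * phi t)"
      by (rule frac_le) (use t s dp le in \<open>auto intro: power_mono\<close>)
    then show "s^(D-1) * (1 / ((1-l) + (mm-1)*(1-t))) \<le> ?g t" by simp
  qed
  also have "integral {s..l} (\<lambda>t. s^(D-1) * (1 / ((1-l) + (mm-1)*(1-t))))
     = s^(D-1) * ((ln ((1-l) + (mm-1)*(1-s)) - ln ((1-l) + (mm-1)*(1-l))) / (mm-1))"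
    unfolding integral_mult_right using integral_recip_lin[of "1-l" "mm-1" s l] s m1 by simp
  finally have A: "s^(D-1) * ((ln ((1-l) + (mm-1)*(1-s)) - ln ((1-l) + (mm-1)*(1-l))) / (mm-1))
     \<le> integral {s..l} ?g" .
  have e1: "ln ((1-l) + (mm-1)*(1-l)) = ln mm + ln (1-l)"
  proof -
    have "(1-l) + (mm-1)*(1-l) = mm * (1-l)" by (simp add: algebra_simps)
    then show ?thesis using s mm_gt by (simp add: ln_mult)
  qed
  have e2: "ln ((mm-1)*(1-s)) \<le> ln ((1-l) + (mm-1)*(1-s))"
  proof -
    have "0 < (mm-1)*(1-s)" using s m1 by simp
    then show ?thesis using s by (subst ln_le_cancel_iff) auto
  qed
  have "s^(D-1) * (ln ((mm-1)*(1-s)) - ln mm - ln (1-l)) / (mm-1)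
      \<le> s^(D-1) * ((ln ((1-l) + (mm-1)*(1-s)) - ln ((1-l) + (mm-1)*(1-l))) / (mm-1))"
    unfolding e1 using e2 s m1 by (simp add: divide_right_mono mult_left_mono)
  then show ?thesis using A J \<open>0 \<le> integral {0..s} ?g\<close> by linarith
qed

end

context llq begin

lemma J_upper:
  assumes s: "0 < s" "s < l" "l < 1" and c: "cs s > 0"
  shows "J D l \<le> 1 / (1 - phi s) + (ln (1 + cs s) - ln (1-l)) / (s * cs s)"
proof -
  let ?g = "\<lambda>t. t^(D-1) / (1 - l * phi t)"
  let ?c = "cs s"
  have int: "?g integrable_on {0..l}"
    by (rule integrable_continuous_interval, rule cont_int) (use s in auto)
  have J: "J D l = integral {0..s} ?g + integral {s..l} ?g"
    unfolding J_def using Henstock_Kurzweil_Integration.integral_combine[OF _ _ int, of s] s by simp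
  have ps: "1 - phi s > 0"
  proof -
    have "cs s * (1 - s) \<le> 1 - phi s" using phi_lower[of s s] s by simp
    moreover have "cs s * (1 - s) > 0" using c s by simp
    ultimately show ?thesis by linarith
  qed
  have "integral {0..s} ?g \<le> integral {0..s} (\<lambda>t. 1 / (1 - phi s))"
  proof (rule integral_le)
    show "?g integrable_on {0..s}"
      by (rule integrable_continuous_interval, rule cont_int) (use s in auto)
    show "(\<lambda>t. 1 / (1 - phi s)) integrable_on {0..s}" by (rule integrable_const_ivl)
    fix t assume t: "t \<in> {0..s}"
    have t0: "0 \<le> t" "t \<le> 1" using t s by auto
    have "1 - phi s \<le> 1 - phi t" using phi_mono[of t s] t by simp
    also have "\<dots> \<le> 1 - l * phi t"
      using phi_nonneg[OF t0(1)] s mult_left_le_one_le[of "phi t" l] by simp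
    finally have le: "1 - phi s \<le> 1 - l * phi t" .
    have "t^(D-1) \<le> 1" using t0 by (simp add: power_le_one)
    then show "?g t \<le> 1 / (1 - phi s)"
      by (intro frac_le) (use t0 ps le in auto)
  qed
  also have "\<dots> = s / (1 - phi s)" using s by simp
  also have "\<dots> \<le> 1 / (1 - phi s)" using s ps by (intro divide_right_mono) auto
  finally have A: "integral {0..s} ?g \<le> 1 / (1 - phi s)" .
  have "integral {s..l} ?g \<le> integral {s..l} (\<lambda>t. (1/s) * (1 / ((1-l) + ?c*(1-t))))"
  proof (rule integral_le)
    show "(\<lambda>t. (1/s) * (1 / ((1-l) + ?c*(1-t)))) integrable_on {s..l}"
      using s c apply (intro integrable_continuous_interval continuous_intros)
      apply auto
      by (smt (verit, best) mult_nonneg_nonneg)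
    show "?g integrable_on {s..l}"
      by (rule integrable_continuous_interval, rule cont_int) (use s in auto)
    fix t assume t: "t \<in> {s..l}"
    have t0: "0 \<le> t" "t \<le> 1" using t s by auto
    have pos: "0 < (1-l) + ?c*(1-t)" using t s c by (simp add: add_pos_nonneg)
    have "s * ((1-l) + ?c*(1-t)) = s*(1-l) + s * (?c*(1-t))" by (simp add: algebra_simps)
    also have "\<dots> \<le> (1-l) + l * (1 - phi t)"
    proof (rule add_mono)
      show "s*(1-l) \<le> 1 - l" using s by (simp add: mult_left_le_one_le)
      have "?c*(1-t) \<le> 1 - phi t" using phi_lower[of s t] t s by simp
      moreover have "0 \<le> ?c*(1-t)" using c t0 by simp
      ultimately show "s * (?c*(1-t)) \<le> l * (1 - phi t)"
        using s by (intro mult_mono) auto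
    qed
    also have "\<dots> = 1 - l * phi t" by (simp add: algebra_simps)
    finally have le: "s * ((1-l) + ?c*(1-t)) \<le> 1 - l * phi t" .
    have "t^(D-1) \<le> 1" using t0 by (simp add: power_le_one)
    then have "?g t \<le> 1 / (s * ((1-l) + ?c*(1-t)))"
      by (intro frac_le) (use t0 pos s le in auto)
    then show "?g t \<le> (1/s) * (1 / ((1-l) + ?c*(1-t)))" by simp
  qed
  also have "\<dots> = (1/s) * ((ln ((1-l) + ?c*(1-s)) - ln ((1-l) + ?c*(1-l))) / ?c)"
    unfolding integral_mult_right using integral_recip_lin[of "1-l" "?c" s l] s c by simp
  also have "\<dots> \<le> (ln (1 + ?c) - ln (1-l)) / (s * ?c)"
  proof -
    have "ln ((1-l) + ?c*(1-s)) \<le> ln (1 + ?c)"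
    proof -
      have "?c*(1-s) \<le> ?c" using c s by (simp add: mult_left_le_one_le)
      moreover have "0 < ?c*(1-s)" using c s by simp
      ultimately have h1: "0 < (1-l) + ?c*(1-s)" and h2: "(1-l) + ?c*(1-s) \<le> 1 + ?c"
        using s by auto
      have h3: "0 < 1 + ?c" using c by simp
      show ?thesis by (subst ln_le_cancel_iff[OF h1 h3]) (rule h2)
    qed
    moreover have "ln (1-l) \<le> ln ((1-l) + ?c*(1-l))"
    proof -
      have "0 < ?c*(1-l)" using s c by simp
      then show ?thesis using s by (subst ln_le_cancel_iff) auto
    qed
    ultimately have "ln ((1-l) + ?c*(1-s)) - ln ((1-l) + ?c*(1-l)) \<le> ln (1 + ?c) - ln (1-l)"
      by linarith
    then have "(ln ((1-l) + ?c*(1-s)) - ln ((1-l) + ?c*(1-l))) / (s * ?c) \<le> (ln (1 + ?c) - ln (1-l)) / (s * ?c)"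
      using s c by (intro divide_right_mono) auto
    then show ?thesis by simp
  qed
  finally show ?thesis using A J by linarith
qed

end

lemma Lg_top: "filterlim (\<lambda>l::real. - ln (1 - l)) at_top (at_left 1)" by real_asymp

lemma Lg_inv: "((\<lambda>l::real. 1 / (- ln (1 - l))) \<longlongrightarrow> 0) (at_left 1)"
  using tendsto_inverse_0_at_top[OF Lg_top] by (simp add: inverse_eq_divide)

lemma Lg_pos: "eventually (\<lambda>l::real. 0 < l \<and> l < 1 \<and> - ln (1 - l) > 0) (at_left 1)"
proof -
  have "eventually (\<lambda>x::real. x \<in> {0<..<1}) (at_left 1)" by (rule eventually_at_left_real) simp
  then show ?thesis
    by eventually_elim (auto simp: ln_less_zero)
qed

context llq begin

lemma J_tendsto: "((\<lambda>l. J D l / (- ln (1 - l))) \<longlongrightarrow> 1 / (mm - 1)) (at_left 1)"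
proof (rule order_tendstoI)
  have m1: "mm - 1 > 0" using mm_gt by simp
  fix a assume a: "a < 1 / (mm - 1)"
  have "((\<lambda>s. s^(D-1) / (mm - 1)) \<longlongrightarrow> 1^(D-1) / (mm - 1)) (at_left 1)"
    by (intro tendsto_intros) (use m1 in auto)
  then have "eventually (\<lambda>s. a < s^(D-1) / (mm - 1)) (at_left 1)"
    using a by (intro order_tendstoD) auto
  moreover have "eventually (\<lambda>x::real. x \<in> {0<..<1}) (at_left 1)" by (rule eventually_at_left_real) simp
  ultimately have "eventually (\<lambda>s. a < s^(D-1) / (mm - 1) \<and> s \<in> {0<..<1}) (at_left 1)"
    by eventually_elim auto
  then obtain s where s: "a < s^(D-1) / (mm - 1)" "0 < s" "s < 1"
    using eventually_happens'[OF trivial_limit_at_left_real] by auto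
  define K where "K = ln ((mm-1)*(1-s)) - ln mm"
  define h where "h l = s^(D-1) / (mm-1) * (K * (1 / (- ln (1 - l))) + 1)" for l :: real
  have "(h \<longlongrightarrow> s^(D-1) / (mm-1) * (K * 0 + 1)) (at_left 1)"
    unfolding h_def by (intro tendsto_intros Lg_inv)
  then have ev1: "eventually (\<lambda>l. a < h l) (at_left 1)"
    using s by (intro order_tendstoD) auto
  have ev2: "eventually (\<lambda>x::real. x \<in> {s<..<1}) (at_left 1)" by (rule eventually_at_left_real) fact
  show "eventually (\<lambda>l. a < J D l / (- ln (1 - l))) (at_left 1)"
    using ev1 ev2 Lg_pos
  proof eventually_elim
    case (elim l)
    then have l: "s < l" "l < 1" and Lp: "- ln (1 - l) > 0" by auto
    have "s^(D-1) * (K - ln (1-l)) / (mm-1) \<le> J D l"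
      using J_lower[of s l D] s l unfolding K_def by (simp add: algebra_simps)
    then have "s^(D-1) * (K - ln (1-l)) / (mm-1) / (- ln (1 - l)) \<le> J D l / (- ln (1 - l))"
      using Lp by (intro divide_right_mono) auto
    moreover have "s^(D-1) * (K - ln (1-l)) / (mm-1) / (- ln (1 - l)) = h l"
      unfolding h_def using Lp m1 by (simp add: field_simps)
    ultimately show ?case using elim by auto
  qed
next
  have m1: "mm - 1 > 0" using mm_gt by simp
  fix a assume a: "1 / (mm - 1) < a"
  have "((\<lambda>s. 1 / (s * cs s)) \<longlongrightarrow> 1 / (1 * (mm - 1))) (at_left 1)"
    by (intro tendsto_intros cs_tendsto) (use m1 cs_tendsto in auto)
  then have "eventually (\<lambda>s. 1 / (s * cs s) < a) (at_left 1)"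
    using a by (intro order_tendstoD) auto
  moreover have "eventually (\<lambda>s. 0 < cs s) (at_left 1)"
    by (rule order_tendstoD(1)[OF cs_tendsto m1])
  moreover have "eventually (\<lambda>x::real. x \<in> {0<..<1}) (at_left 1)" by (rule eventually_at_left_real) simp
  ultimately have "eventually (\<lambda>s. 1 / (s * cs s) < a \<and> 0 < cs s \<and> s \<in> {0<..<1}) (at_left 1)"
    by eventually_elim auto
  then obtain s where s: "1 / (s * cs s) < a" "0 < cs s" "0 < s" "s < 1"
    using eventually_happens'[OF trivial_limit_at_left_real] by auto
  define E where "E = 1 / (1 - phi s)"
  define K where "K = ln (1 + cs s)"
  define h where "h l = E * (1 / (- ln (1 - l))) + (K * (1 / (- ln (1 - l))) + 1) / (s * cs s)" for l :: real
  have "(h \<longlongrightarrow> E * 0 + (K * 0 + 1) / (s * cs s)) (at_left 1)"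
    unfolding h_def by (intro tendsto_intros Lg_inv) (use s in auto)
  then have ev1: "eventually (\<lambda>l. h l < a) (at_left 1)"
    using s by (intro order_tendstoD) auto
  have ev2: "eventually (\<lambda>x::real. x \<in> {s<..<1}) (at_left 1)" by (rule eventually_at_left_real) fact
  show "eventually (\<lambda>l. J D l / (- ln (1 - l)) < a) (at_left 1)"
    using ev1 ev2 Lg_pos
  proof eventually_elim
    case (elim l)
    then have l: "s < l" "l < 1" and Lp: "- ln (1 - l) > 0" by auto
    have "J D l \<le> E + (K - ln (1-l)) / (s * cs s)"
      using J_upper[of s l D] s l unfolding K_def E_def by simp
    then have "J D l / (- ln (1 - l)) \<le> (E + (K - ln (1-l)) / (s * cs s)) / (- ln (1 - l))"
      using Lp by (intro divide_right_mono) auto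
    moreover have "(E + (K - ln (1-l)) / (s * cs s)) / (- ln (1 - l)) = h l"
      unfolding h_def using Lp s by (simp add: field_simps)
    ultimately show ?case using elim by auto
  qed
qed

end

lemma exp_decay: "(c::real) > 0 \<Longrightarrow> ((\<lambda>k::nat. exp (- c * real k)) \<longlongrightarrow> 0) sequentially"
  by real_asymp

context llq begin

lemma sumpow: "(\<Sum>j<n. p j * x ^ d j) = x * phi x"
proof -
  have "(\<Sum>j<n. p j * x ^ d j) = (\<Sum>j<n. x * (p j * x ^ (d j - 1)))"
  proof (rule sum.cong)
    fix j assume "j \<in> {..<n}"
    then have "d j = Suc (d j - 1)" using d_pos by auto
    then have "x ^ d j = x * x ^ (d j - 1)" by (metis power_Suc)
    then show "p j * x ^ d j = x * (p j * x ^ (d j - 1))" by simp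
  qed simp
  then show ?thesis unfolding phi_def by (simp add: sum_distrib_left)
qed

lemma ode_bounds:
  fixes f :: "real \<Rightarrow> real" and l :: real
  assumes l: "0 < l" "l < 1"
    and der: "\<And>w. 0 < w \<Longrightarrow> DERIV f w :> - (f w * (1 - l * phi (f w)))"
    and cont: "continuous_on {0..} f"
    and init: "f 0 = l"
    and w1: "0 \<le> w1" and inside: "\<And>v. 0 \<le> v \<Longrightarrow> v < w1 \<Longrightarrow> 0 < f v \<and> f v < 1"
  shows "l * exp (- w1) \<le> f w1 \<and> f w1 \<le> l * exp (- (1 - l) * w1)"
proof -
  have c1: "continuous_on {0..w1} f" using cont by (rule continuous_on_subset) auto
  have "(\<lambda>v. f v * exp v) 0 \<le> (\<lambda>v. f v * exp v) w1"
  proof (rule DERIV_nonneg_imp_increasing_open[OF w1])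
    fix x assume x: "0 < x" "x < w1"
    have fx: "0 < f x" "f x < 1" using inside[of x] x by auto
    have "DERIV (\<lambda>v. f v * exp v) x :> (- (f x * (1 - l * phi (f x)))) * exp x + exp x * f x"
      by (rule DERIV_mult[OF der[OF x(1)] DERIV_exp])
    moreover have "0 \<le> (- (f x * (1 - l * phi (f x)))) * exp x + exp x * f x"
    proof -
      have "(- (f x * (1 - l * phi (f x)))) * exp x + exp x * f x = f x * (l * phi (f x)) * exp x"
        by (simp add: algebra_simps)
      moreover have "0 \<le> phi (f x)" using fx by (intro phi_nonneg) auto
      ultimately show ?thesis using fx l by simp
    qed
    ultimately show "\<exists>y. DERIV (\<lambda>v. f v * exp v) x :> y \<and> 0 \<le> y" by blast
  next
    show "continuous_on {0..w1} (\<lambda>v. f v * exp v)" using c1 by (intro continuous_intros)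
  qed
  then have A: "l \<le> f w1 * exp w1" using init by simp
  have "(\<lambda>v. f v * exp ((1 - l) * v)) w1 \<le> (\<lambda>v. f v * exp ((1 - l) * v)) 0"
  proof (rule DERIV_nonpos_imp_decreasing_open[OF w1])
    fix x assume x: "0 < x" "x < w1"
    have fx: "0 < f x" "f x < 1" using inside[of x] x by auto
    have e2: "DERIV (\<lambda>v. exp ((1 - l) * v)) x :> exp ((1 - l) * x) * (1 - l)"
      by (auto intro!: derivative_eq_intros)
    have "DERIV (\<lambda>v. f v * exp ((1 - l) * v)) x :>
        (- (f x * (1 - l * phi (f x)))) * exp ((1 - l) * x) + (exp ((1 - l) * x) * (1 - l)) * f x"
      by (rule DERIV_mult[OF der[OF x(1)] e2])
    moreover have "(- (f x * (1 - l * phi (f x)))) * exp ((1 - l) * x) + (exp ((1 - l) * x) * (1 - l)) * f x \<le> 0"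
    proof -
      have "(- (f x * (1 - l * phi (f x)))) * exp ((1 - l) * x) + (exp ((1 - l) * x) * (1 - l)) * f x
          = (f x * l) * (exp ((1 - l) * x) * (phi (f x) - 1))"
        by (simp add: algebra_simps)
      moreover have "phi (f x) \<le> 1" using fx by (intro phi_le1) auto
      ultimately show ?thesis using fx l
        by (simp add: mult_nonneg_nonpos)
    qed
    ultimately show "\<exists>y. DERIV (\<lambda>v. f v * exp ((1 - l) * v)) x :> y \<and> y \<le> 0" by blast
  next
    show "continuous_on {0..w1} (\<lambda>v. f v * exp ((1 - l) * v))" using c1 by (intro continuous_intros)
  qed
  then have B: "f w1 * exp ((1 - l) * w1) \<le> l" using init by simp
  have "l * exp (- w1) \<le> f w1"
    using A by (simp add: exp_minus field_simps)
  moreover have "f w1 \<le> l * exp (- (1 - l) * w1)"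
  proof -
    have "f w1 = (f w1 * exp ((1 - l) * w1)) * exp (- (1 - l) * w1)"
      by (simp add: mult.assoc algebra_simps flip: exp_add)
    also have "\<dots> \<le> l * exp (- (1 - l) * w1)" using B by (intro mult_right_mono) auto
    finally show ?thesis .
  qed
  ultimately show ?thesis by simp
qed

end

context llq begin

lemma ode_range:
  fixes f :: "real \<Rightarrow> real" and l :: real
  assumes l: "0 < l" "l < 1"
    and der: "\<And>w. 0 < w \<Longrightarrow> DERIV f w :> - (f w * (1 - l * phi (f w)))"
    and cont: "continuous_on {0..} f"
    and init: "f 0 = l"
  shows "\<And>w. 0 \<le> w \<Longrightarrow> 0 < f w \<and> f w < 1"
proof (rule ccontr)
  fix w assume w: "0 \<le> w" and nw: "\<not> (0 < f w \<and> f w < 1)"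
  define T where "T = {0..} \<inter> f -` ({..0} \<union> {1..})"
  have clT: "closed T" unfolding T_def
    by (intro continuous_closed_preimage cont) auto
  have wT: "w \<in> T" using w nw unfolding T_def by auto
  then have ne: "T \<noteq> {}" by auto
  have bdd: "bdd_below T" unfolding T_def by (rule bdd_belowI[of _ 0]) auto
  define w1 where "w1 = Inf T"
  have w1T: "w1 \<in> T" unfolding w1_def by (rule closed_contains_Inf[OF ne bdd clT])
  then have w10: "0 \<le> w1" unfolding T_def by auto
  have inside: "0 < f v \<and> f v < 1" if "0 \<le> v" "v < w1" for v
  proof (rule ccontr)
    assume "\<not> (0 < f v \<and> f v < 1)"
    then have "v \<in> T" using that unfolding T_def by auto
    then have "w1 \<le> v" unfolding w1_def using bdd by (rule cInf_lower)
    then show False using that by simp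
  qed
  have "l * exp (- w1) \<le> f w1 \<and> f w1 \<le> l * exp (- (1 - l) * w1)"
    by (rule ode_bounds[OF l der cont init w10 inside]) auto
  then have b1: "l * exp (- w1) \<le> f w1" and b2: "f w1 \<le> l * exp (- (1 - l) * w1)" by auto
  have a1: "0 < l * exp (- w1)" using l by simp
  have "exp (- (1 - l) * w1) \<le> 1" using l w10 by (auto simp: mult_nonpos_nonneg)
  then have a2: "l * exp (- (1 - l) * w1) \<le> l * 1" using l
    by (intro mult_left_mono) auto
  have "0 < f w1 \<and> f w1 < 1" using a1 a2 b1 b2 l by linarith
  then show False using w1T unfolding T_def by auto
qed

lemma sol_integral:
  fixes f :: "real \<Rightarrow> real" and l :: real
  assumes l: "0 < l" "l < 1"
    and ode: "\<forall>w\<ge>0. (f has_real_derivative (l * (\<Sum>j<n. p j * f w ^ d j) - f w)) (at w within {0..})"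
    and init: "f 0 = l" and D: "1 \<le> D"
  shows "integral {0..} (\<lambda>w. f w ^ D) = J D l"
proof -
  define hh where "hh x = x * (1 - l * phi x)" for x
  have ode': "(f has_real_derivative - hh (f w)) (at w within {0..})" if "0 \<le> w" for w
  proof -
    have "l * (\<Sum>j<n. p j * f w ^ d j) - f w = - hh (f w)"
      unfolding hh_def sumpow by (simp add: algebra_simps)
    then show ?thesis using ode that by metis
  qed
  have der: "DERIV f w :> - (f w * (1 - l * phi (f w)))" if "0 < w" for w
  proof -
    have "at w within {0..} = at w" using that by (intro at_within_interior) auto
    then show ?thesis using ode'[of w] that unfolding hh_def by simp
  qed
  have cont: "continuous_on {0..} f"
    unfolding continuous_on_eq_continuous_within using ode' by (auto intro: DERIV_continuous)
  have rng: "0 < f w \<and> f w < 1" if "0 \<le> w" for w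
    using ode_range[OF l der cont init] that by blast
  have dec: "f w \<le> l * exp (- (1 - l) * w)" if "0 \<le> w" for w
    using ode_bounds[OF l der cont init that] rng by auto
  define q where "q t = t^(D-1) / (1 - l * phi t)" for t
  define P where "P x = integral {0..x} q" for x
  have qc: "continuous_on {0..1} q" unfolding q_def by (rule cont_int) (use l in auto)
  have Pc: "continuous_on {0..1} P"
    unfolding P_def by (rule indefinite_integral_continuous_1) (rule integrable_continuous_interval[OF qc])
  have Pder: "DERIV P y :> q y" if "0 < y" "y < 1" for y
  proof -
    have "(P has_vector_derivative q y) (at y within {0..1})"
      unfolding P_def by (rule integral_has_vector_derivative[OF qc]) (use that in auto)
    moreover have "at y within {0..1} = at y" using that by (intro at_within_interior) auto
    ultimately show ?thesis by (simp add: has_real_derivative_iff_has_vector_derivative)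
  qed
  have Gder: "((\<lambda>w. - P (f w)) has_real_derivative f w ^ D) (at w within {0..})" if "0 \<le> w" for w
  proof -
    have fw: "0 < f w" "f w < 1" using rng[OF that] by auto
    have "((\<lambda>w. P (f w)) has_real_derivative q (f w) * (- hh (f w))) (at w within {0..})"
      by (rule DERIV_chain2[OF Pder[OF fw] ode'[OF that]])
    moreover have "q (f w) * hh (f w) = f w ^ D"
    proof -
      have k: "1 - l * phi (f w) > 0" using fw l by (intro denom_pos) auto
      have "f w ^ (D - 1) * f w = f w ^ D"
      proof (cases D)
        case 0 then show ?thesis using D by simp
      next
        case (Suc e) then show ?thesis by simp
      qed
      then show ?thesis using k unfolding q_def hh_def by (simp add: field_simps)
    qed
    ultimately have "((\<lambda>w. P (f w)) has_real_derivative - (f w ^ D)) (at w within {0..})" by simp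
    then show ?thesis using DERIV_minus by fastforce
  qed
  have FTC: "((\<lambda>w. f w ^ D) has_integral (P l - P (f W))) {0..W}" if "0 \<le> W" for W
  proof -
    have "((\<lambda>w. f w ^ D) has_integral ((- P (f W)) - (- P (f 0)))) {0..W}"
    proof (rule fundamental_theorem_of_calculus[OF that])
      fix x assume x: "x \<in> {0..W}"
      have "((\<lambda>w. - P (f w)) has_real_derivative f x ^ D) (at x within {0..W})"
        by (rule has_field_derivative_subset[OF Gder]) (use x in auto)
      then show "((\<lambda>w. - P (f w)) has_vector_derivative f x ^ D) (at x within {0..W})"
        by (simp add: has_real_derivative_iff_has_vector_derivative)
    qed
    then show ?thesis using init by simp
  qed
  define fk where "fk k w = (if w \<in> {0..real k} then f w ^ D else 0)" for k :: nat and w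
  have intk: "integral {0..} (fk k) = P l - P (f (real k))" for k
  proof -
    have "integral {0..} (fk k) = integral ({0..real k} \<inter> {0..}) (\<lambda>w. f w ^ D)"
      unfolding fk_def by (rule integral_restrict_Int)
    also have "{0..real k} \<inter> {0..} = {0..real k}" by auto
    finally show ?thesis using FTC[of "real k"] by (simp add: integral_unique)
  qed
  have fk_int: "fk k integrable_on {0..}" for k
  proof -
    have "(\<lambda>w. f w ^ D) integrable_on ({0..real k} \<inter> {0..})"
      using FTC[of "real k"] by (auto simp: Int_absorb2 intro: has_integral_integrable)
    then show ?thesis unfolding fk_def by (subst integrable_restrict_Int)
  qed
  have fto0: "((\<lambda>k::nat. f (real k)) \<longlongrightarrow> 0) sequentially"
  proof (rule tendsto_sandwich[of "\<lambda>_. 0" _ _ "\<lambda>k. l * exp (- (1 - l) * real k)"])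
    show "eventually (\<lambda>k. 0 \<le> f (real k)) sequentially"
      by (intro always_eventually allI) (use rng in \<open>auto intro: less_imp_le\<close>)
    show "eventually (\<lambda>k. f (real k) \<le> l * exp (- (1 - l) * real k)) sequentially"
      by (intro always_eventually allI) (use dec in auto)
    show "((\<lambda>_. 0) \<longlongrightarrow> (0::real)) sequentially" by simp
    have "((\<lambda>k. l * exp (- (1 - l) * real k)) \<longlongrightarrow> l * 0) sequentially"
      by (intro tendsto_intros exp_decay) (use l in auto)
    then show "((\<lambda>k. l * exp (- (1 - l) * real k)) \<longlongrightarrow> 0) sequentially" by simp
  qed
  have "((\<lambda>k::nat. P (f (real k))) \<longlongrightarrow> P 0) sequentially"
  proof (rule continuous_on_tendsto_compose[OF Pc fto0])
    show "eventually (\<lambda>k. f (real k) \<in> {0..1}) sequentially"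
      by (intro always_eventually allI) (use rng in \<open>fastforce intro: less_imp_le\<close>)
  qed simp
  then have lim1: "((\<lambda>k. integral {0..} (fk k)) \<longlongrightarrow> P l - P 0) sequentially"
    unfolding intk by (intro tendsto_intros)
  have mc: "(\<lambda>w. f w ^ D) integrable_on {0..} \<and>
      ((\<lambda>k. integral {0..} (fk k)) \<longlongrightarrow> integral {0..} (\<lambda>w. f w ^ D)) sequentially"
  proof (rule monotone_convergence_increasing[OF fk_int])
    fix k :: nat and x :: real assume x: "x \<in> {0..}"
    have "0 \<le> f x ^ D" using rng[of x] x by auto
    then show "fk k x \<le> fk (Suc k) x" unfolding fk_def by auto
  next
    fix x :: real assume x: "x \<in> {0..}"
    have "eventually (\<lambda>k. fk k x = f x ^ D) sequentially"
    proof -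
      obtain N :: nat where "x \<le> real N" using real_arch_simple by blast
      then show ?thesis unfolding fk_def eventually_sequentially using x
        by (intro exI[of _ N]) auto
    qed
    then show "((\<lambda>k. fk k x) \<longlongrightarrow> f x ^ D) sequentially" by (rule tendsto_eventually)
  next
    have "Bseq (\<lambda>k. integral {0..} (fk k))"
      using lim1 by (intro convergent_imp_Bseq) (auto simp: convergent_def)
    then show "bounded (range (\<lambda>k. integral {0..} (fk k)))"
      by (simp add: Elementary_Normed_Spaces.Bseq_eq_bounded)
  qed
  have "integral {0..} (\<lambda>w. f w ^ D) = P l - P 0"
    using mc lim1 LIMSEQ_unique by blast
  also have "\<dots> = J D l" unfolding P_def J_def q_def by simp
  finally show ?thesis .
qed

end

theorem theorem4p3:
  fixes n :: nat and p :: "nat \<Rightarrow> real" and d :: "nat \<Rightarrow> nat"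
    and F :: "real \<Rightarrow> real \<Rightarrow> real" and i :: nat
  assumes p_nonneg: "\<forall>j<n. p j \<ge> 0"
    and p_sum: "(\<Sum>j<n. p j) = 1"
    and d_pos: "\<forall>j<n. d j \<ge> 1"
    and drift: "(\<Sum>j<n. p j * real (d j)) > 1"
    and ode: "\<forall>l\<in>{0<..<1}. \<forall>w\<ge>0.
       (F l has_real_derivative (l * (\<Sum>j<n. p j * F l w ^ d j) - F l w)) (at w within {0..})"
    and init: "\<forall>l\<in>{0<..<1}. F l 0 = l"
    and i: "i < n"
  shows "((\<lambda>l. - ERi F d i l / ln (1 - l)) \<longlongrightarrow> 1 / ((\<Sum>j<n. p j * real (d j)) - 1)) (at_left 1)
       \<and> ((\<lambda>l. - ER n p d F l / ln (1 - l)) \<longlongrightarrow> 1 / ((\<Sum>j<n. p j * real (d j)) - 1)) (at_left 1)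
       \<and> ((\<lambda>l. - EWi F d i l / ln (1 - l)) \<longlongrightarrow> 1 / ((\<Sum>j<n. p j * real (d j)) - 1)) (at_left 1)
       \<and> ((\<lambda>l. - EW n p d F l / ln (1 - l)) \<longlongrightarrow> 1 / ((\<Sum>j<n. p j * real (d j)) - 1)) (at_left 1)"
proof -
  interpret llq n p d using p_nonneg p_sum d_pos drift by unfold_locales
  define L where "L = 1 / ((\<Sum>j<n. p j * real (d j)) - 1)"
  have L: "L = 1 / (mm - 1)" unfolding L_def mm_def ..
  have neg: "\<And>x y :: real. - x / y = x / (- y)" by simp
  have Wj: "((\<lambda>l. EWi F d j l / (- ln (1 - l))) \<longlongrightarrow> L) (at_left 1)" if j: "j < n" for j
  proof (rule Lim_transform_eventually)
    show "((\<lambda>l. J (d j) l / (- ln (1 - l))) \<longlongrightarrow> L) (at_left 1)" unfolding L by (rule J_tendsto)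
    show "eventually (\<lambda>l. J (d j) l / (- ln (1 - l)) = EWi F d j l / (- ln (1 - l))) (at_left 1)"
      using Lg_pos
    proof eventually_elim
      case (elim l)
      then have l: "l \<in> {0<..<1}" by auto
      have "integral {0..} (\<lambda>w. F l w ^ d j) = J (d j) l"
        by (rule sol_integral) (use l ode init d_pos j in auto)
      then show ?case unfolding EWi_def by simp
    qed
  qed
  have W: "((\<lambda>l. EW n p d F l / (- ln (1 - l))) \<longlongrightarrow> L) (at_left 1)"
  proof -
    have "((\<lambda>l. \<Sum>j<n. p j * (EWi F d j l / (- ln (1 - l)))) \<longlongrightarrow> (\<Sum>j<n. p j * L)) (at_left 1)"
      by (intro tendsto_sum tendsto_mult tendsto_const Wj) auto
    moreover have "(\<Sum>j<n. p j * L) = L" using p_sum by (simp add: sum_distrib_right[symmetric])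
    moreover have "\<And>l. (\<Sum>j<n. p j * (EWi F d j l / (- ln (1 - l)))) = EW n p d F l / (- ln (1 - l))"
      unfolding EW_def by (simp add: sum_divide_distrib sum_negf)
    ultimately show ?thesis by simp
  qed
  have R: "((\<lambda>l. (1 + X l) / (- ln (1 - l))) \<longlongrightarrow> L) (at_left 1)"
    if X: "((\<lambda>l. X l / (- ln (1 - l))) \<longlongrightarrow> L) (at_left 1)" for X
  proof -
    have "((\<lambda>l. 1 / (- ln (1 - l)) + X l / (- ln (1 - l))) \<longlongrightarrow> 0 + L) (at_left 1)"
      by (intro tendsto_add Lg_inv X)
    then show ?thesis by (simp add: add_divide_distrib)
  qed
  have "((\<lambda>l. ERi F d i l / (- ln (1 - l))) \<longlongrightarrow> L) (at_left 1)"
    unfolding ERi_def by (rule R[OF Wj[OF i]])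
  moreover have "((\<lambda>l. ER n p d F l / (- ln (1 - l))) \<longlongrightarrow> L) (at_left 1)"
    unfolding ER_def by (rule R[OF W])
  ultimately show ?thesis using Wj[OF i] W unfolding neg L_def by simp
qed

end
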